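(* Let $n\ge1$ and $C_n=\{x\in\mathbb{R}^n:|x_1|+\dots+|x_n|\le1\}$. For generic $y\in\mathbb{R}^n$ (all $y_j^2$ distinct and nonzero), \[ \widehat{\chi_{C_n}}(y)=\begin{cases}\pi^{-n}(-1)^{(n-1)/2}\displaystyle\sum_{j=1}^n\frac{y_j^{n-2}\sin(2\pi y_j)}{\prod_{i\ne j}(y_j^2-y_i^2)}, & n\text{ odd},\\[2ex] \pi^{-n}(-1)^{n/2-1}\displaystyle\sum_{j=1}^n\frac{2y_j^{n-2}\sin(\pi y_j)^2}{\prod_{i\ne j}(y_j^2-y_i^2)}, & n\text{ even}.\end{cases} \]
   Context: $\chi_S$ denotes the indicator function of a set $S$ and $\widehat f(y)=\int f(x)e^{-2\pi i\langle x,y\rangle}dx$. *)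

theory Defs
  imports "HOL-Analysis.Analysis"
begin

definition fourier_transform :: "('a::euclidean_space \<Rightarrow> complex) \<Rightarrow> 'a \<Rightarrow> complex" where
  "fourier_transform f y = integral UNIV (\<lambda>x. f x * exp (- 2 * pi * \<i> * complex_of_real (x \<bullet> y)))"

definition cross_polytope :: "(real ^ 'n) set" where
  "cross_polytope = {x. (\<Sum>i\<in>UNIV. \<bar>x $ i\<bar>) \<le> 1}"

end

theory Submission
  imports Defs
begin

definition dd :: "'a::field set \<Rightarrow> ('a \<Rightarrow> 'a) \<Rightarrow> 'a" where
  "dd S f = (\<Sum>x\<in>S. f x / (\<Prod>l\<in>S-{x}. x - l))"

lemma dd_mult_x:
  assumes "finite S" "x0 \<in> S"
  shows "dd S (\<lambda>x. x * f x) = x0 * dd S f + dd (S-{x0}) f"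
proof -
  have "dd S (\<lambda>x. x * f x) - x0 * dd S f = (\<Sum>x\<in>S. (x - x0) * f x / (\<Prod>l\<in>S-{x}. x - l))"
    unfolding dd_def by (simp add: sum_distrib_left sum_subtractf[symmetric] algebra_simps diff_divide_distrib)
  also have "\<dots> = (\<Sum>x\<in>S-{x0}. (x - x0) * f x / (\<Prod>l\<in>S-{x}. x - l))"
    using assms by (intro sum.mono_neutral_right) auto
  also have "\<dots> = (\<Sum>x\<in>S-{x0}. f x / (\<Prod>l\<in>(S-{x0})-{x}. x - l))"
  proof (rule sum.cong[OF refl])
    fix x assume x: "x \<in> S - {x0}"
    have "S - {x} = insert x0 ((S-{x0})-{x})" using x assms by auto
    hence "(\<Prod>l\<in>S-{x}. x - l) = (x - x0) * (\<Prod>l\<in>(S-{x0})-{x}. x - l)"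
      using assms by (simp add: prod.insert)
    thus "(x - x0) * f x / (\<Prod>l\<in>S-{x}. x - l) = f x / (\<Prod>l\<in>(S-{x0})-{x}. x - l)"
      using x by simp
  qed
  finally show ?thesis unfolding dd_def by (simp add: algebra_simps)
qed

lemma dd_two:
  assumes "finite S" "x0 \<in> S" "x1 \<in> S" "x0 \<noteq> x1"
  shows "dd S f = (dd (S-{x1}) f - dd (S-{x0}) f) / (x0 - x1)"
proof -
  have "x0 * dd S f + dd (S-{x0}) f = x1 * dd S f + dd (S-{x1}) f"
    using dd_mult_x[OF assms(1,2), of f] dd_mult_x[OF assms(1,3), of f] by simp
  hence "(x0 - x1) * dd S f = dd (S-{x1}) f - dd (S-{x0}) f" by (simp add: algebra_simps)
  thus ?thesis using assms(4) by (simp add: field_simps)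
qed

lemma two_elems:
  assumes "finite S" "card S \<ge> 2"
  obtains x0 x1 where "x0 \<in> S" "x1 \<in> S" "x0 \<noteq> x1"
proof -
  have "\<not> card S \<le> Suc 0" using assms(2) by simp
  then show ?thesis using card_le_Suc0_iff_eq[OF assms(1)] that by blast
qed

lemma dd_const_card:
  assumes c: "\<And>T. finite T \<Longrightarrow> card T = k \<Longrightarrow> dd T f = c" and k: "k \<ge> 1"
  shows "n \<ge> k + 1 \<Longrightarrow> finite S \<Longrightarrow> card S = n \<Longrightarrow> dd S f = 0"
proof (induction n arbitrary: S rule: dec_induct)
  case base
  have c2: "2 \<le> card S" using k base by simp
  obtain x0 x1 where x: "x0 \<in> S" "x1 \<in> S" "x0 \<noteq> x1"
    by (rule two_elems[OF base(1) c2])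
  have "dd (S-{x1}) f = c" "dd (S-{x0}) f = c"
    using c[of "S-{x1}"] c[of "S-{x0}"] base x by (auto simp: card_Diff_singleton)
  thus ?case using dd_two[OF base(1) x, of f] by simp
next
  case (step m)
  have c2: "2 \<le> card S" using k step by simp
  obtain x0 x1 where x: "x0 \<in> S" "x1 \<in> S" "x0 \<noteq> x1"
    by (rule two_elems[OF step(4) c2])
  have "dd (S-{x1}) f = 0" "dd (S-{x0}) f = 0"
    using step(3)[of "S-{x1}"] step(3)[of "S-{x0}"] step x by (auto simp: card_Diff_singleton)
  thus ?case using dd_two[OF step(4) x, of f] by simp
qed

lemma dd_monomial:
  "finite S \<Longrightarrow> (card S = d + 1 \<longrightarrow> dd S (\<lambda>x. x ^ d) = 1) \<and> (card S \<ge> d + 2 \<longrightarrow> dd S (\<lambda>x. x ^ d) = 0)"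
proof (induction d arbitrary: S)
  case 0
  have one: "dd T (\<lambda>x. x ^ 0) = 1" if "finite T" "card T = 1" for T :: "'a set"
    using that by (auto simp: dd_def card_1_singleton_iff)
  show ?case using one dd_const_card[of 1 "\<lambda>x. x ^ 0" 1 "card S" S] 0 by auto
next
  case (Suc d)
  have one: "dd T (\<lambda>x. x ^ Suc d) = 1" if T: "finite T" "card T = Suc d + 1" for T :: "'a set"
  proof -
    obtain x0 where x0: "x0 \<in> T" using T by fastforce
    have "dd T (\<lambda>x. x ^ Suc d) = dd T (\<lambda>x. x * x ^ d)" by simp
    also have "\<dots> = x0 * dd T (\<lambda>x. x ^ d) + dd (T-{x0}) (\<lambda>x. x ^ d)"
      by (rule dd_mult_x[OF T(1) x0])
    also have "\<dots> = 1" using Suc.IH[of T] Suc.IH[of "T-{x0}"] T x0 by (simp add: card_Diff_singleton)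
    finally show ?thesis .
  qed
  show ?case using one dd_const_card[of "Suc d + 1" "\<lambda>x. x ^ Suc d" 1 "card S" S] Suc.prems by auto
qed

lemma dd_monomial_zero:
  "finite S \<Longrightarrow> card S \<ge> d + 2 \<Longrightarrow> dd S (\<lambda>x. x ^ d) = 0"
  using dd_monomial by blast


lemma int_exp_pos:
  fixes z :: complex
  assumes "z \<noteq> 0" "0 \<le> t"
  shows "integral\<^sup>L lborel (\<lambda>y. indicator {0..t} y *\<^sub>R exp (z * of_real y)) = (exp (z * of_real t) - 1) / z"
proof -
  have "integral\<^sup>L lborel (\<lambda>y. indicator {0..t} y *\<^sub>R exp (z * of_real y)) =
        exp (z * of_real t) / z - exp (z * of_real 0) / z"
  proof (rule integral_FTC_atLeastAtMost[OF assms(2), where F="\<lambda>y. exp (z * of_real y) / z"])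
    fix x assume "0 \<le> x" "x \<le> t"
    show "((\<lambda>y. exp (z * of_real y) / z) has_vector_derivative exp (z * of_real x)) (at x within {0..t})"
      using assms
      by (intro derivative_eq_intros has_complex_derivative_imp_has_vector_derivative [unfolded o_def] | simp)+
  next
    show "continuous_on {0..t} (\<lambda>y. exp (z * complex_of_real y))"
      by (intro continuous_intros)
  qed
  thus ?thesis by (simp add: diff_divide_distrib)
qed

lemma int_exp_neg:
  fixes z :: complex
  assumes "z \<noteq> 0" "0 \<le> t"
  shows "integral\<^sup>L lborel (\<lambda>y. indicator {-t..0} y *\<^sub>R exp (z * of_real y)) = (1 - exp (- z * of_real t)) / z"
proof -
  have "integral\<^sup>L lborel (\<lambda>y. indicator {-t..0} y *\<^sub>R exp (z * of_real y)) =
        exp (z * of_real 0) / z - exp (z * of_real (-t)) / z"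
  proof (rule integral_FTC_atLeastAtMost[where F="\<lambda>y. exp (z * of_real y) / z"])
    show "-t \<le> 0" using assms by simp
    fix x assume "-t \<le> x" "x \<le> 0"
    show "((\<lambda>y. exp (z * of_real y) / z) has_vector_derivative exp (z * of_real x)) (at x within {-t..0})"
      using assms
      by (intro derivative_eq_intros has_complex_derivative_imp_has_vector_derivative [unfolded o_def] | simp)+
  next
    show "continuous_on {-t..0} (\<lambda>y. exp (z * complex_of_real y))"
      by (intro continuous_intros)
  qed
  thus ?thesis by (simp add: diff_divide_distrib)
qed

lemma integrable_Icc_exp:
  fixes z :: complex
  shows "integrable lborel (\<lambda>y. indicator {a..b} y *\<^sub>R exp (z * complex_of_real y))"
  by (rule borel_integrable_atLeastAtMost'[of a b "\<lambda>y. exp (z * complex_of_real y)", unfolded set_integrable_def])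
    (intro continuous_intros)

lemma conv_exp_sum:
  fixes b t :: real and c :: "complex \<Rightarrow> complex"
  assumes fin: "finite L" and t: "0 \<le> t"
    and L: "\<And>l. l \<in> L \<Longrightarrow> l \<noteq> \<i> * of_real b \<and> l \<noteq> - \<i> * of_real b"
  shows "integral\<^sup>L lborel (\<lambda>y. indicator {-t..t} y *\<^sub>R
            (exp (- \<i> * of_real (b * y)) * (\<Sum>l\<in>L. c l * exp (l * of_real (t - \<bar>y\<bar>))))) =
         (\<Sum>l\<in>L. c l * ((exp (- \<i> * of_real (b * t)) - exp (l * of_real t)) / (- \<i> * of_real b - l)
                     + (exp (\<i> * of_real (b * t)) - exp (l * of_real t)) / (\<i> * of_real b - l)))"
proof -
  define g1 where "g1 y = (\<Sum>l\<in>L. (c l * exp (l * of_real t)) * (indicator {-t..0} y *\<^sub>R exp ((l - \<i> * of_real b) * of_real y)))" for y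
  define g2 where "g2 y = (\<Sum>l\<in>L. (c l * exp (l * of_real t)) * (indicator {0..t} y *\<^sub>R exp ((- \<i> * of_real b - l) * of_real y)))" for y
  have ae: "AE y in lborel. indicator {-t..t} y *\<^sub>R
            (exp (- \<i> * of_real (b * y)) * (\<Sum>l\<in>L. c l * exp (l * of_real (t - \<bar>y\<bar>)))) = g1 y + g2 y"
    using AE_lborel_singleton[of 0]
  proof eventually_elim
    case (elim y)
    show ?case
    proof (cases "y < 0")
      case True
      have "exp (- \<i> * of_real (b * y)) * (\<Sum>l\<in>L. c l * exp (l * of_real (t - \<bar>y\<bar>))) =
            (\<Sum>l\<in>L. (c l * exp (l * of_real t)) * exp ((l - \<i> * of_real b) * of_real y))"
        unfolding sum_distrib_left
        by (intro sum.cong refl) (use True in \<open>simp add: exp_add[symmetric] algebra_simps\<close>)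
      thus ?thesis using True unfolding g1_def g2_def by (simp add: indicator_def)
    next
      case False
      hence "y > 0" using elim by simp
      have "exp (- \<i> * of_real (b * y)) * (\<Sum>l\<in>L. c l * exp (l * of_real (t - \<bar>y\<bar>))) =
            (\<Sum>l\<in>L. (c l * exp (l * of_real t)) * exp ((- \<i> * of_real b - l) * of_real y))"
        unfolding sum_distrib_left
        by (intro sum.cong refl) (use \<open>y > 0\<close> in \<open>simp add: exp_add[symmetric] algebra_simps\<close>)
      thus ?thesis using \<open>y > 0\<close> unfolding g1_def g2_def by (simp add: indicator_def)
    qed
  qed
  have i1: "integrable lborel g1" unfolding g1_def
    apply (rule Bochner_Integration.integrable_sum) apply (rule integrable_mult_right) apply (rule integrable_Icc_exp) done
  have i2: "integrable lborel g2" unfolding g2_def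
    apply (rule Bochner_Integration.integrable_sum) apply (rule integrable_mult_right) apply (rule integrable_Icc_exp) done
  have "integral\<^sup>L lborel (\<lambda>y. indicator {-t..t} y *\<^sub>R
            (exp (- \<i> * of_real (b * y)) * (\<Sum>l\<in>L. c l * exp (l * of_real (t - \<bar>y\<bar>))))) =
        integral\<^sup>L lborel (\<lambda>y. g1 y + g2 y)"
    by (rule integral_cong_AE) (use ae borel_measurable_integrable[OF i1] borel_measurable_integrable[OF i2] in auto)
  also have "\<dots> = integral\<^sup>L lborel g1 + integral\<^sup>L lborel g2"
    using i1 i2 by simp
  also have "integral\<^sup>L lborel g1 = (\<Sum>l\<in>L. (c l * exp (l * of_real t)) * integral\<^sup>L lborel (\<lambda>y. indicator {-t..0} y *\<^sub>R exp ((l - \<i> * of_real b) * of_real y)))"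
    unfolding g1_def
    apply (subst Bochner_Integration.integral_sum)
     apply (rule integrable_mult_right, rule integrable_Icc_exp)
    apply (rule sum.cong[OF refl])
    apply (rule integral_mult_right_zero)
    done
  also have "\<dots> = (\<Sum>l\<in>L. (c l * exp (l * of_real t)) * ((1 - exp (- (l - \<i> * of_real b) * of_real t)) / (l - \<i> * of_real b)))"
  proof (rule sum.cong[OF refl])
    fix l assume "l \<in> L"
    hence "l - \<i> * of_real b \<noteq> 0" using L by auto
    from int_exp_neg[OF this t] show "(c l * exp (l * of_real t)) * integral\<^sup>L lborel (\<lambda>y. indicator {-t..0} y *\<^sub>R exp ((l - \<i> * of_real b) * of_real y)) = (c l * exp (l * of_real t)) * ((1 - exp (- (l - \<i> * of_real b) * of_real t)) / (l - \<i> * of_real b))"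
      by simp
  qed
  also have "integral\<^sup>L lborel g2 = (\<Sum>l\<in>L. (c l * exp (l * of_real t)) * integral\<^sup>L lborel (\<lambda>y. indicator {0..t} y *\<^sub>R exp ((- \<i> * of_real b - l) * of_real y)))"
    unfolding g2_def
    apply (subst Bochner_Integration.integral_sum)
     apply (rule integrable_mult_right, rule integrable_Icc_exp)
    apply (rule sum.cong[OF refl])
    apply (rule integral_mult_right_zero)
    done
  also have "\<dots> = (\<Sum>l\<in>L. (c l * exp (l * of_real t)) * ((exp ((- \<i> * of_real b - l) * of_real t) - 1) / (- \<i> * of_real b - l)))"
  proof (rule sum.cong[OF refl])
    fix l assume "l \<in> L"
    hence "- \<i> * of_real b - l \<noteq> 0" using L by (auto simp: algebra_simps)
    from int_exp_pos[OF this t] show "(c l * exp (l * of_real t)) * integral\<^sup>L lborel (\<lambda>y. indicator {0..t} y *\<^sub>R exp ((- \<i> * of_real b - l) * of_real y)) = (c l * exp (l * of_real t)) * ((exp ((- \<i> * of_real b - l) * of_real t) - 1) / (- \<i> * of_real b - l))"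
      by simp
  qed
  also have "(\<Sum>l\<in>L. (c l * exp (l * of_real t)) * ((1 - exp (- (l - \<i> * of_real b) * of_real t)) / (l - \<i> * of_real b))) +
             (\<Sum>l\<in>L. (c l * exp (l * of_real t)) * ((exp ((- \<i> * of_real b - l) * of_real t) - 1) / (- \<i> * of_real b - l))) =
         (\<Sum>l\<in>L. c l * ((exp (- \<i> * of_real (b * t)) - exp (l * of_real t)) / (- \<i> * of_real b - l)
                     + (exp (\<i> * of_real (b * t)) - exp (l * of_real t)) / (\<i> * of_real b - l)))"
    unfolding sum.distrib[symmetric]
  proof (intro sum.cong refl)
    fix l assume l: "l \<in> L"
    have n1: "l - \<i> * of_real b \<noteq> 0" and n2: "- \<i> * of_real b - l \<noteq> 0" "\<i> * of_real b - l \<noteq> 0"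
      using L[OF l] by (auto simp: algebra_simps)
    have e1: "exp (l * of_real t) * exp (- (l - \<i> * of_real b) * of_real t) = exp (\<i> * of_real (b * t))"
      by (simp add: exp_add[symmetric] algebra_simps)
    have e2: "exp (l * of_real t) * exp ((- \<i> * of_real b - l) * of_real t) = exp (- \<i> * of_real (b * t))"
      by (simp add: exp_add[symmetric] algebra_simps)
    have "c l * exp (l * of_real t) * ((1 - exp (- (l - \<i> * of_real b) * of_real t)) / (l - \<i> * of_real b)) =
          c l * ((exp (\<i> * of_real (b * t)) - exp (l * of_real t)) / (\<i> * of_real b - l))"
      using n1 n2 e1 by (simp add: field_simps)
    moreover have "c l * exp (l * of_real t) * ((exp ((- \<i> * of_real b - l) * of_real t) - 1) / (- \<i> * of_real b - l)) =
          c l * ((exp (- \<i> * of_real (b * t)) - exp (l * of_real t)) / (- \<i> * of_real b - l))"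
      using n1 n2 e2 by (simp add: field_simps)
    ultimately show "c l * exp (l * of_real t) * ((1 - exp (- (l - \<i> * of_real b) * of_real t)) / (l - \<i> * of_real b)) +
         c l * exp (l * of_real t) * ((exp ((- \<i> * of_real b - l) * of_real t) - 1) / (- \<i> * of_real b - l)) =
         c l * ((exp (- \<i> * of_real (b * t)) - exp (l * of_real t)) / (- \<i> * of_real b - l) +
              (exp (\<i> * of_real (b * t)) - exp (l * of_real t)) / (\<i> * of_real b - l))"
      by (simp add: algebra_simps)
  qed
  finally show ?thesis .
qed


definition Phi :: "'i set \<Rightarrow> ('i \<Rightarrow> real) \<Rightarrow> real \<Rightarrow> complex" where
  "Phi I a t = (\<integral>x. (if (\<Sum>i\<in>I. \<bar>x i\<bar>) \<le> t then exp (- \<i> * of_real (\<Sum>i\<in>I. a i * x i)) else 0) \<partial>(Pi\<^sub>M I (\<lambda>_. lborel)))"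

lemma norm_exp_mi: "norm (exp (- \<i> * complex_of_real r)) = 1"
  by (simp add: norm_exp_eq_Re)

lemma Phi_neg: fixes I :: "'i set" assumes "t < 0" shows "Phi I a t = 0"
proof -
  have "(if (\<Sum>i\<in>I. \<bar>x i\<bar>) \<le> t then exp (- \<i> * of_real (\<Sum>i\<in>I. a i * x i)) else 0) = 0" for x :: "'i \<Rightarrow> real"
  proof -
    have "0 \<le> (\<Sum>i\<in>I. \<bar>x i\<bar>)" by (simp add: sum_nonneg)
    hence "\<not> (\<Sum>i\<in>I. \<bar>x i\<bar>) \<le> t" using assms by linarith
    thus ?thesis by simp
  qed
  thus ?thesis by (simp add: Phi_def)
qed

lemma Phi_meas[measurable]:
  "(\<lambda>x. if (\<Sum>i\<in>I. \<bar>x i\<bar>) \<le> t then exp (- \<i> * complex_of_real (\<Sum>i\<in>I. a i * x i)) else 0)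
     \<in> borel_measurable (Pi\<^sub>M I (\<lambda>_. lborel))"
  by measurable

lemma Phi_integrable:
  assumes fin: "finite I"
  shows "integrable (Pi\<^sub>M I (\<lambda>_. lborel))
     (\<lambda>x. if (\<Sum>i\<in>I. \<bar>x i\<bar>) \<le> t then exp (- \<i> * complex_of_real (\<Sum>i\<in>I. a i * x i)) else 0)"
proof (rule integrableI_bounded_set[where A="Pi\<^sub>E I (\<lambda>_. {-\<bar>t\<bar>..\<bar>t\<bar>})" and B=1])
  interpret product_sigma_finite "\<lambda>_. lborel" by standard
  show "Pi\<^sub>E I (\<lambda>_. {-\<bar>t\<bar>..\<bar>t\<bar>}) \<in> sets (Pi\<^sub>M I (\<lambda>_. lborel))"
    using fin by (intro sets_PiM_I_finite) auto
  show "emeasure (Pi\<^sub>M I (\<lambda>_. lborel)) (Pi\<^sub>E I (\<lambda>_. {-\<bar>t\<bar>..\<bar>t\<bar>})) < \<infinity>"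
    using fin ennreal_power[of "2*\<bar>t\<bar>" "card I"] by (subst emeasure_PiM) (auto simp: prod_ennreal)
  show "AE x in Pi\<^sub>M I (\<lambda>_. lborel). x \<in> Pi\<^sub>E I (\<lambda>_. {-\<bar>t\<bar>..\<bar>t\<bar>}) \<longrightarrow>
      norm (if (\<Sum>i\<in>I. \<bar>x i\<bar>) \<le> t then exp (- \<i> * complex_of_real (\<Sum>i\<in>I. a i * x i)) else 0) \<le> 1"
    by (intro AE_I2) (auto simp: norm_exp_mi)
  show "AE x in Pi\<^sub>M I (\<lambda>_. lborel). x \<notin> Pi\<^sub>E I (\<lambda>_. {-\<bar>t\<bar>..\<bar>t\<bar>}) \<longrightarrow>
      (if (\<Sum>i\<in>I. \<bar>x i\<bar>) \<le> t then exp (- \<i> * complex_of_real (\<Sum>i\<in>I. a i * x i)) else 0) = 0"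
  proof (intro AE_I2 impI)
    fix x assume x: "x \<in> space (Pi\<^sub>M I (\<lambda>_. lborel))" "x \<notin> Pi\<^sub>E I (\<lambda>_. {-\<bar>t\<bar>..\<bar>t\<bar>})"
    show "(if (\<Sum>i\<in>I. \<bar>x i\<bar>) \<le> t then exp (- \<i> * complex_of_real (\<Sum>i\<in>I. a i * x i)) else 0) = 0"
    proof (cases "(\<Sum>i\<in>I. \<bar>x i\<bar>) \<le> t")
      case True
      have "x i \<in> {-\<bar>t\<bar>..\<bar>t\<bar>}" if "i \<in> I" for i
        using member_le_sum[of i I "\<lambda>i. \<bar>x i\<bar>"] that fin True by (auto simp: abs_le_iff)
      hence "x \<in> Pi\<^sub>E I (\<lambda>_. {-\<bar>t\<bar>..\<bar>t\<bar>})" using x(1) by (auto simp: space_PiM PiE_def Pi_def)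
      with x(2) show ?thesis by blast
    qed simp
  qed
qed simp

lemma Phi_insert:
  fixes I :: "'i set" and k :: 'i
  assumes fin: "finite I" and k: "k \<notin> I"
  shows "Phi (insert k I) a t = (\<integral>y. exp (- \<i> * of_real (a k * y)) * Phi I a (t - \<bar>y\<bar>) \<partial>lborel)"
proof -
  interpret product_sigma_finite "\<lambda>_. lborel" by standard
  interpret FI: finite_product_sigma_finite "\<lambda>_. lborel" I by standard (rule fin)
  interpret P: pair_sigma_finite "Pi\<^sub>M I (\<lambda>_. lborel)" lborel ..
  define h where "h x y = (if (\<Sum>i\<in>I. \<bar>x i\<bar>) + \<bar>y\<bar> \<le> t
      then exp (- \<i> * of_real (\<Sum>i\<in>I. a i * x i)) * exp (- \<i> * of_real (a k * y)) else 0)" for x :: "'i \<Rightarrow> real" and y :: real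
  have "Phi (insert k I) a t = (\<integral>x. (\<integral>y. (if (\<Sum>i\<in>insert k I. \<bar>(x(k:=y)) i\<bar>) \<le> t then
          exp (- \<i> * of_real (\<Sum>i\<in>insert k I. a i * (x(k:=y)) i)) else 0) \<partial>lborel) \<partial>Pi\<^sub>M I (\<lambda>_. lborel))"
    unfolding Phi_def by (rule product_integral_insert[OF fin k Phi_integrable]) (use fin in simp)
  also have "\<dots> = (\<integral>x. (\<integral>y. h x y \<partial>lborel) \<partial>Pi\<^sub>M I (\<lambda>_. lborel))"
  proof (intro Bochner_Integration.integral_cong refl)
    fix x :: "'i \<Rightarrow> real" and y :: real
    have s1: "(\<Sum>i\<in>I. \<bar>(x(k:=y)) i\<bar>) = (\<Sum>i\<in>I. \<bar>x i\<bar>)" by (rule sum.cong) (use k in auto)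
    have s2: "(\<Sum>i\<in>I. a i * (x(k:=y)) i) = (\<Sum>i\<in>I. a i * x i)" by (rule sum.cong) (use k in auto)
    have e: "exp (- \<i> * of_real (a k * y + (\<Sum>i\<in>I. a i * x i))) =
             exp (- \<i> * of_real (\<Sum>i\<in>I. a i * x i)) * exp (- \<i> * of_real (a k * y))"
      by (simp add: exp_add[symmetric] algebra_simps)
    show "(if (\<Sum>i\<in>insert k I. \<bar>(x(k:=y)) i\<bar>) \<le> t then
          exp (- \<i> * of_real (\<Sum>i\<in>insert k I. a i * (x(k:=y)) i)) else 0) = h x y"
      using fin k s1 s2 e by (simp add: h_def add.commute)
  qed
  also have "\<dots> = (\<integral>y. (\<integral>x. h x y \<partial>Pi\<^sub>M I (\<lambda>_. lborel)) \<partial>lborel)"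
  proof (rule P.Fubini_integral[symmetric])
    show "integrable (Pi\<^sub>M I (\<lambda>_. lborel) \<Otimes>\<^sub>M lborel) (case_prod h)"
    proof (rule integrableI_bounded_set[where A="Pi\<^sub>E I (\<lambda>_. {-\<bar>t\<bar>..\<bar>t\<bar>}) \<times> {-\<bar>t\<bar>..\<bar>t\<bar>}" and B=1])
      show "Pi\<^sub>E I (\<lambda>_. {-\<bar>t\<bar>..\<bar>t\<bar>}) \<times> {-\<bar>t\<bar>..\<bar>t\<bar>} \<in> sets (Pi\<^sub>M I (\<lambda>_. lborel) \<Otimes>\<^sub>M lborel)"
        using fin by (intro pair_measureI sets_PiM_I_finite) auto
      show "case_prod h \<in> borel_measurable (Pi\<^sub>M I (\<lambda>_. lborel) \<Otimes>\<^sub>M lborel)"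
        unfolding h_def case_prod_beta' by measurable
      show "emeasure (Pi\<^sub>M I (\<lambda>_. lborel) \<Otimes>\<^sub>M lborel) (Pi\<^sub>E I (\<lambda>_. {-\<bar>t\<bar>..\<bar>t\<bar>}) \<times> {-\<bar>t\<bar>..\<bar>t\<bar>}) < \<infinity>"
        using fin ennreal_power[of "2*\<bar>t\<bar>" "card I"] by (subst lborel.emeasure_pair_measure_Times) (auto intro!: sets_PiM_I_finite simp: emeasure_PiM prod_ennreal ennreal_mult_less_top)
      show "AE x in Pi\<^sub>M I (\<lambda>_. lborel) \<Otimes>\<^sub>M lborel. x \<in> Pi\<^sub>E I (\<lambda>_. {-\<bar>t\<bar>..\<bar>t\<bar>}) \<times> {-\<bar>t\<bar>..\<bar>t\<bar>} \<longrightarrow> norm (case_prod h x) \<le> 1"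
        by (intro AE_I2) (auto simp: h_def norm_mult norm_exp_mi)
      show "AE x in Pi\<^sub>M I (\<lambda>_. lborel) \<Otimes>\<^sub>M lborel. x \<notin> Pi\<^sub>E I (\<lambda>_. {-\<bar>t\<bar>..\<bar>t\<bar>}) \<times> {-\<bar>t\<bar>..\<bar>t\<bar>} \<longrightarrow> case_prod h x = 0"
      proof (intro AE_I2 impI)
        fix p assume p: "p \<in> space (Pi\<^sub>M I (\<lambda>_. lborel) \<Otimes>\<^sub>M lborel)" "p \<notin> Pi\<^sub>E I (\<lambda>_. {-\<bar>t\<bar>..\<bar>t\<bar>}) \<times> {-\<bar>t\<bar>..\<bar>t\<bar>}"
        obtain x y where xy: "p = (x, y)" by (cases p)
        show "case_prod h p = 0"
        proof (cases "(\<Sum>i\<in>I. \<bar>x i\<bar>) + \<bar>y\<bar> \<le> t")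
          case True
          have "x i \<in> {-\<bar>t\<bar>..\<bar>t\<bar>}" if "i \<in> I" for i
            using member_le_sum[of i I "\<lambda>i. \<bar>x i\<bar>"] that fin True by (auto simp: abs_le_iff)
          moreover have "y \<in> {-\<bar>t\<bar>..\<bar>t\<bar>}"
          proof -
            have "0 \<le> (\<Sum>i\<in>I. \<bar>x i\<bar>)" by (simp add: sum_nonneg)
            hence "\<bar>y\<bar> \<le> \<bar>t\<bar>" using True by linarith
            thus ?thesis by (auto simp: abs_le_iff)
          qed
          ultimately have "p \<in> Pi\<^sub>E I (\<lambda>_. {-\<bar>t\<bar>..\<bar>t\<bar>}) \<times> {-\<bar>t\<bar>..\<bar>t\<bar>}"
            using p(1) xy by (auto simp: space_pair_measure space_PiM PiE_def Pi_def)
          with p(2) show ?thesis by blast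
        qed (simp add: xy h_def)
      qed
    qed
  qed
  also have "\<dots> = (\<integral>y. exp (- \<i> * of_real (a k * y)) * Phi I a (t - \<bar>y\<bar>) \<partial>lborel)"
  proof (intro Bochner_Integration.integral_cong refl)
    fix y
    have "(\<integral>x. h x y \<partial>Pi\<^sub>M I (\<lambda>_. lborel)) = (\<integral>x. exp (- \<i> * of_real (a k * y)) *
       (if (\<Sum>i\<in>I. \<bar>x i\<bar>) \<le> t - \<bar>y\<bar> then exp (- \<i> * of_real (\<Sum>i\<in>I. a i * x i)) else 0) \<partial>Pi\<^sub>M I (\<lambda>_. lborel))"
      by (intro Bochner_Integration.integral_cong refl) (auto simp: h_def)
    also have "\<dots> = exp (- \<i> * of_real (a k * y)) * Phi I a (t - \<bar>y\<bar>)"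
      unfolding Phi_def by (rule integral_mult_right_zero)
    finally show "(\<integral>x. h x y \<partial>Pi\<^sub>M I (\<lambda>_. lborel)) = exp (- \<i> * of_real (a k * y)) * Phi I a (t - \<bar>y\<bar>)" .
  qed
  finally show ?thesis .
qed


lemma dd_insert:
  assumes "finite L" "\<mu> \<notin> L"
  shows "dd (insert \<mu> L) f = f \<mu> / (\<Prod>x\<in>L. \<mu> - x) + dd L (\<lambda>l. f l / (l - \<mu>))"
proof -
  have "dd (insert \<mu> L) f = f \<mu> / (\<Prod>x\<in>insert \<mu> L - {\<mu>}. \<mu> - x) + (\<Sum>l\<in>L. f l / (\<Prod>x\<in>insert \<mu> L - {l}. l - x))"
    unfolding dd_def using assms by (simp add: sum.insert)
  also have "insert \<mu> L - {\<mu>} = L" using assms by auto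
  also have "(\<Sum>l\<in>L. f l / (\<Prod>x\<in>insert \<mu> L - {l}. l - x)) = dd L (\<lambda>l. f l / (l - \<mu>))"
    unfolding dd_def
  proof (rule sum.cong[OF refl])
    fix l assume l: "l \<in> L"
    have "insert \<mu> L - {l} = insert \<mu> (L - {l})" using l assms by auto
    hence "(\<Prod>x\<in>insert \<mu> L - {l}. l - x) = (l - \<mu>) * (\<Prod>x\<in>L - {l}. l - x)"
      using assms by (simp add: prod.insert)
    thus "f l / (\<Prod>x\<in>insert \<mu> L - {l}. l - x) = f l / (l - \<mu>) / (\<Prod>x\<in>L - {l}. l - x)"
      by simp
  qed
  finally show ?thesis .
qed

lemma dd_uminus: "dd L (\<lambda>l. - f l) = - dd L f"
  unfolding dd_def by (simp add: sum_negf[symmetric])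

lemma prod_diff_nz: "finite L \<Longrightarrow> l \<notin> L \<Longrightarrow> (\<Prod>x\<in>L. l - x) \<noteq> (0::'a::field)"
  by (auto simp: prod_zero_iff)

lemma aux93: fixes zK zw zp zE1 zE2 zEl zx1 zx2 zu zv zl :: complex
  shows "(zK*zw/zp) * (zE2/zx2 + zE1/zx1 + zEl*(2*zl/(zu*zv))) = zE2*zK*((zw/zx2)/zp) + zE1*zK*((zw/zx1)/zp) + (2*zK)*((zl*zw)*zEl/zu/zv/zp)"
  by (simp add: divide_inverse algebra_simps inverse_mult_distrib)

lemma aux84: fixes A B x l :: complex assumes "x \<noteq> l"
  shows "(A - B)/(x - l) = A/(x-l) + B * (1/(l - x))"
proof -
  have e: "l - x = -(x - l)" by simp
  show ?thesis by (simp add: diff_divide_distrib minus_divide_right)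
qed

lemma aux86: fixes l m :: complex assumes "l - m \<noteq> 0" "l + m \<noteq> 0"
  shows "1 / (l - - m) + 1 / (l - m) = 2 * l / ((l - m) * (l - - m))"
  using assms by (simp add: field_simps)

lemma step_alg:
  fixes L :: "complex set" and b t :: real and m :: nat
  assumes fin: "finite L" and m: "m \<ge> 1" and cardL: "card L \<ge> m" and b: "b \<noteq> 0"
    and n1: "\<i> * of_real b \<notin> L" and n2: "- \<i> * of_real b \<notin> L"
  shows "(\<Sum>l\<in>L. (2^m * l^(m-1) / (\<Prod>x\<in>L-{l}. l - x)) *
            ((exp (- \<i> * of_real (b * t)) - exp (l * of_real t)) / (- \<i> * of_real b - l)
           + (exp (\<i> * of_real (b * t)) - exp (l * of_real t)) / (\<i> * of_real b - l)))
       = 2^(m+1) * dd (insert (\<i> * of_real b) (insert (- \<i> * of_real b) L)) (\<lambda>z. z^m * exp (z * of_real t))"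
proof -
  define \<mu>1 where "\<mu>1 = \<i> * complex_of_real b"
  define \<mu>2 where "\<mu>2 = - \<i> * complex_of_real b"
  define E where "E z = exp (z * complex_of_real t)" for z
  define Q where "Q \<mu> = (\<Prod>x\<in>L. \<mu> - x)" for \<mu>
  define P where "P l = (\<Prod>x\<in>L-{l}. l - x)" for l
  have m12: "\<mu>2 = - \<mu>1" unfolding \<mu>1_def \<mu>2_def by simp
  have nz1: "\<mu>1 \<noteq> 0" using b unfolding \<mu>1_def by simp
  have d12: "\<mu>1 - \<mu>2 = 2 * \<mu>1" using m12 by simp
  hence n12: "\<mu>1 \<noteq> \<mu>2" using nz1 by auto
  have Ql: "\<mu>1 \<notin> L" "\<mu>2 \<notin> L" using n1 n2 unfolding \<mu>1_def \<mu>2_def by auto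
  have Qnz: "Q \<mu> \<noteq> 0" if "\<mu> \<notin> L" for \<mu> unfolding Q_def using prod_diff_nz[OF fin that] .
  have Pnz: "P l \<noteq> 0" if "l \<in> L" for l unfolding P_def using prod_diff_nz[of "L-{l}" l] fin by auto
  have van: "dd L (\<lambda>l. l^(m-1) / (\<mu> - l)) = \<mu>^(m-1) / Q \<mu>" if mu: "\<mu> \<notin> L" for \<mu>
  proof -
    have "card (insert \<mu> L) \<ge> (m - 1) + 2" using cardL mu fin m by simp
    hence "dd (insert \<mu> L) (\<lambda>x. x^(m-1)) = 0" using dd_monomial_zero fin by blast
    hence h1: "\<mu>^(m-1) / Q \<mu> + dd L (\<lambda>l. l^(m-1) / (l - \<mu>)) = 0"
      using dd_insert[OF fin mu, of "\<lambda>x. x^(m-1)"] unfolding Q_def by simp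
    have h2: "dd L (\<lambda>l. l^(m-1) / (\<mu> - l)) = - dd L (\<lambda>l. l^(m-1) / (l - \<mu>))"
    proof -
      have "(\<lambda>l. l^(m-1) / (\<mu> - l)) = (\<lambda>l. - (l^(m-1) / (l - \<mu>)))"
        by (rule ext) (metis minus_diff_eq divide_minus_right)
      thus ?thesis by (simp add: dd_uminus)
    qed
    show ?thesis unfolding h2 using h1[unfolded add_eq_0_iff2] by (rule sym)
  qed
  have e1: "exp (\<i> * of_real (b * t)) = E \<mu>1" unfolding E_def \<mu>1_def by (simp add: algebra_simps)
  have e2: "exp (- \<i> * of_real (b * t)) = E \<mu>2" unfolding E_def \<mu>2_def by (simp add: algebra_simps)
  have "(\<Sum>l\<in>L. (2^m * l^(m-1) / (\<Prod>x\<in>L-{l}. l - x)) *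
            ((exp (- \<i> * of_real (b * t)) - exp (l * of_real t)) / (- \<i> * of_real b - l)
           + (exp (\<i> * of_real (b * t)) - exp (l * of_real t)) / (\<i> * of_real b - l)))
      = (\<Sum>l\<in>L. E \<mu>2 * 2^m * ((l^(m-1) / (\<mu>2 - l)) / P l) + E \<mu>1 * 2^m * ((l^(m-1) / (\<mu>1 - l)) / P l)
             + 2^(m+1) * ((l^m * E l / (l - \<mu>1) / (l - \<mu>2)) / P l))"
  proof (rule sum.cong[OF refl])
    fix l assume l: "l \<in> L"
    have a1: "l - \<mu>1 \<noteq> 0" "l - \<mu>2 \<noteq> 0" "\<mu>1 - l \<noteq> 0" "\<mu>2 - l \<noteq> 0" using l Ql by auto
    have a2: "l + \<mu>1 \<noteq> 0" "\<mu>1 + l \<noteq> 0" using a1 m12 by (auto simp: algebra_simps)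
    have pl: "P l \<noteq> 0" using Pnz l .
    obtain m' where m': "m = Suc m'" using m by (cases m) auto
    have ex: "exp (l * of_real t) = E l" unfolding E_def ..
    have split: "(E \<mu>2 - E l) / (\<mu>2 - l) + (E \<mu>1 - E l) / (\<mu>1 - l) =
        E \<mu>2 / (\<mu>2 - l) + E \<mu>1 / (\<mu>1 - l) + E l * (2 * l / ((l - \<mu>1) * (l - \<mu>2)))"
    proof -
      have "(E \<mu>2 - E l) / (\<mu>2 - l) + (E \<mu>1 - E l) / (\<mu>1 - l) =
            E \<mu>2 / (\<mu>2 - l) + E \<mu>1 / (\<mu>1 - l) + E l * (1 / (l - \<mu>2) + 1 / (l - \<mu>1))"
        using a1 by (simp add: aux84 algebra_simps)
      also have "1 / (l - \<mu>2) + 1 / (l - \<mu>1) = 2 * l / ((l - \<mu>1) * (l - \<mu>2))"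
        using a1 a2 unfolding m12 by (subst aux86) (auto simp: algebra_simps)
      finally show ?thesis .
    qed
    have pw: "l^m = l * l^(m-1)" using m' by simp
    have "(2^m * l^(m-1) / P l) * ((E \<mu>2 - E l) / (\<mu>2 - l) + (E \<mu>1 - E l) / (\<mu>1 - l)) =
          E \<mu>2 * 2^m * ((l^(m-1) / (\<mu>2 - l)) / P l) + E \<mu>1 * 2^m * ((l^(m-1) / (\<mu>1 - l)) / P l)
             + 2^(m+1) * ((l^m * E l / (l - \<mu>1) / (l - \<mu>2)) / P l)"
      unfolding split pw aux93 by simp
    thus "(2^m * l^(m-1) / (\<Prod>x\<in>L-{l}. l - x)) *
            ((exp (- \<i> * of_real (b * t)) - exp (l * of_real t)) / (- \<i> * of_real b - l)
           + (exp (\<i> * of_real (b * t)) - exp (l * of_real t)) / (\<i> * of_real b - l)) =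
          E \<mu>2 * 2^m * ((l^(m-1) / (\<mu>2 - l)) / P l) + E \<mu>1 * 2^m * ((l^(m-1) / (\<mu>1 - l)) / P l)
             + 2^(m+1) * ((l^m * E l / (l - \<mu>1) / (l - \<mu>2)) / P l)"
      unfolding e1 e2 ex P_def[symmetric] \<mu>1_def[symmetric] \<mu>2_def[symmetric] by simp
  qed
  also have "\<dots> = E \<mu>2 * 2^m * dd L (\<lambda>l. l^(m-1) / (\<mu>2 - l)) + E \<mu>1 * 2^m * dd L (\<lambda>l. l^(m-1) / (\<mu>1 - l))
        + 2^(m+1) * dd L (\<lambda>l. l^m * E l / (l - \<mu>1) / (l - \<mu>2))"
    unfolding dd_def P_def sum.distrib sum_distrib_left by (simp add: mult.assoc)
  also have "\<dots> = E \<mu>2 * 2^m * (\<mu>2^(m-1) / Q \<mu>2) + E \<mu>1 * 2^m * (\<mu>1^(m-1) / Q \<mu>1)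
        + 2^(m+1) * dd L (\<lambda>l. l^m * E l / (l - \<mu>1) / (l - \<mu>2))"
    using van[OF Ql(1)] van[OF Ql(2)] by simp
  also have "\<dots> = 2^(m+1) * dd (insert \<mu>1 (insert \<mu>2 L)) (\<lambda>z. z^m * E z)"
  proof -
    have d1: "dd (insert \<mu>1 (insert \<mu>2 L)) (\<lambda>z. z^m * E z) =
        \<mu>1^m * E \<mu>1 / ((\<mu>1 - \<mu>2) * Q \<mu>1) + dd (insert \<mu>2 L) (\<lambda>l. l^m * E l / (l - \<mu>1))"
      using dd_insert[of "insert \<mu>2 L" \<mu>1 "\<lambda>z. z^m * E z"] fin Ql n12 unfolding Q_def
      by (simp add: prod.insert)
    have d2: "dd (insert \<mu>2 L) (\<lambda>l. l^m * E l / (l - \<mu>1)) =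
        \<mu>2^m * E \<mu>2 / (\<mu>2 - \<mu>1) / Q \<mu>2 + dd L (\<lambda>l. l^m * E l / (l - \<mu>1) / (l - \<mu>2))"
      using dd_insert[OF fin Ql(2), of "\<lambda>l. l^m * E l / (l - \<mu>1)"] unfolding Q_def by simp
    obtain m' where m': "m = Suc m'" using m by (cases m) auto
    have p1: "\<mu>1^m = \<mu>1 * \<mu>1^(m-1)" "\<mu>2^m = \<mu>2 * \<mu>2^(m-1)" using m' by simp_all
    have d21: "\<mu>2 - \<mu>1 = 2 * \<mu>2" using m12 by simp
    have nz2: "\<mu>2 \<noteq> 0" using nz1 m12 by simp
    have "2^(m+1) * (\<mu>1^m * E \<mu>1 / ((\<mu>1 - \<mu>2) * Q \<mu>1)) = E \<mu>1 * 2^m * (\<mu>1^(m-1) / Q \<mu>1)"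
      unfolding p1 d12 using nz1 Qnz[OF Ql(1)] by (simp add: field_simps)
    moreover have "2^(m+1) * (\<mu>2^m * E \<mu>2 / (\<mu>2 - \<mu>1) / Q \<mu>2) = E \<mu>2 * 2^m * (\<mu>2^(m-1) / Q \<mu>2)"
      unfolding p1 d21 using nz2 Qnz[OF Ql(2)] by (simp add: field_simps)
    ultimately have "E \<mu>2 * 2^m * (\<mu>2^(m-1) / Q \<mu>2) + E \<mu>1 * 2^m * (\<mu>1^(m-1) / Q \<mu>1) =
          2^(m+1) * (\<mu>1^m * E \<mu>1 / ((\<mu>1 - \<mu>2) * Q \<mu>1) + \<mu>2^m * E \<mu>2 / (\<mu>2 - \<mu>1) / Q \<mu>2)"
      by (simp add: distrib_left)
    thus ?thesis unfolding d1 d2 by (simp add: algebra_simps)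
  qed
  finally show ?thesis unfolding \<mu>1_def \<mu>2_def E_def .
qed


definition Lam :: "'i set \<Rightarrow> ('i \<Rightarrow> real) \<Rightarrow> complex set" where
  "Lam I a = (\<lambda>j. \<i> * of_real (a j)) ` I \<union> (\<lambda>j. - \<i> * of_real (a j)) ` I"

definition Fcl :: "'i set \<Rightarrow> ('i \<Rightarrow> real) \<Rightarrow> real \<Rightarrow> complex" where
  "Fcl I a t = (if I = {} then 1 else 2 ^ card I * dd (Lam I a) (\<lambda>z. z ^ (card I - 1) * exp (z * of_real t)))"

definition Lset :: "'i set \<Rightarrow> ('i \<Rightarrow> real) \<Rightarrow> complex set" where
  "Lset I a = (if I = {} then {0} else Lam I a)"

definition cf :: "'i set \<Rightarrow> ('i \<Rightarrow> real) \<Rightarrow> complex \<Rightarrow> complex" where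
  "cf I a l = (if I = {} then 1 else 2^card I * l^(card I - 1) / (\<Prod>x\<in>Lam I a - {l}. l - x))"

definition A_ok :: "'i set \<Rightarrow> ('i \<Rightarrow> real) \<Rightarrow> bool" where
  "A_ok I a \<longleftrightarrow> (\<forall>i\<in>I. a i \<noteq> 0) \<and> (\<forall>i\<in>I. \<forall>j\<in>I. i \<noteq> j \<longrightarrow> \<bar>a i\<bar> \<noteq> \<bar>a j\<bar>)"

lemma finite_Lam: "finite I \<Longrightarrow> finite (Lam I a)"
  by (simp add: Lam_def)

lemma finite_Lset: "finite I \<Longrightarrow> finite (Lset I a)"
  by (simp add: Lset_def finite_Lam)

lemma Lam_insert: "Lam (insert k I) a = insert (\<i> * of_real (a k)) (insert (- \<i> * of_real (a k)) (Lam I a))"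
  by (auto simp: Lam_def)

lemma Fcl_rep: "Fcl I a s = (\<Sum>l\<in>Lset I a. cf I a l * exp (l * of_real s))"
proof (cases "I = {}")
  case True thus ?thesis by (simp add: Fcl_def Lset_def cf_def)
next
  case False
  thus ?thesis unfolding Fcl_def Lset_def cf_def dd_def
    by (simp add: sum_distrib_left divide_inverse algebra_simps)
qed

lemma card_Lam:
  assumes "finite I" "A_ok I a" shows "card I \<le> card (Lam I a)"
proof -
  have ia: "inj_on a I"
    using assms(2) unfolding A_ok_def inj_on_def by metis
  have "inj_on (\<lambda>j. \<i> * complex_of_real (a j)) I"
    using ia unfolding inj_on_def by simp
  hence "card ((\<lambda>j. \<i> * complex_of_real (a j)) ` I) = card I" by (rule card_image)
  moreover have "card ((\<lambda>j. \<i> * complex_of_real (a j)) ` I) \<le> card (Lam I a)"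
    using assms(1) by (intro card_mono finite_Lam) (auto simp: Lam_def)
  ultimately show ?thesis by simp
qed

lemma Lam_notin:
  assumes "k \<notin> I" "A_ok (insert k I) a"
  shows "\<i> * of_real (a k) \<notin> Lam I a" "- \<i> * of_real (a k) \<notin> Lam I a"
proof -
  have *: "\<bar>a k\<bar> \<noteq> \<bar>a j\<bar>" if "j \<in> I" for j
    using assms that unfolding A_ok_def by (metis insertCI)
  show "\<i> * of_real (a k) \<notin> Lam I a"
  proof
    assume "\<i> * of_real (a k) \<in> Lam I a"
    then obtain j where j: "j \<in> I" "a k = a j \<or> a k = - a j"
      unfolding Lam_def by (auto simp: complex_eq_iff)
    thus False using *[OF j(1)] by auto
  qed
  show "- \<i> * of_real (a k) \<notin> Lam I a"
  proof
    assume "- \<i> * of_real (a k) \<in> Lam I a"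
    then obtain j where j: "j \<in> I" "a k = a j \<or> a k = - a j"
      unfolding Lam_def by (auto simp: complex_eq_iff)
    thus False using *[OF j(1)] by auto
  qed
qed

lemma dd_pair: assumes "x \<noteq> y" shows "dd {x, y} f = f x / (x - y) + f y / (y - x)"
proof -
  have "{x, y} - {x} = {y}" "{x, y} - {y} = {x}" using assms by auto
  thus ?thesis unfolding dd_def using assms by simp
qed

lemma A_ok_subset: "A_ok (insert k I) a \<Longrightarrow> A_ok I a"
  unfolding A_ok_def by blast

lemma Phi_closed:
  assumes "finite I" "A_ok I a" "0 \<le> t"
  shows "Phi I a t = Fcl I a t"
  using assms
proof (induction I arbitrary: t rule: finite_induct)
  case (empty t)
  thus ?case by (simp add: Phi_def PiM_empty lebesgue_integral_count_space_finite Fcl_def)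
next
  case (insert k I t)
  have okI: "A_ok I a" using A_ok_subset insert.prems(1) .
  have IH: "Phi I a s = Fcl I a s" if "0 \<le> s" for s using insert.IH[OF okI that] .
  define b where "b = a k"
  have bnz: "b \<noteq> 0" using insert.prems(1) unfolding A_ok_def b_def by auto
  have nL: "\<i> * of_real b \<notin> Lam I a" "- \<i> * of_real b \<notin> Lam I a"
    using Lam_notin[OF insert.hyps(2) insert.prems(1)] unfolding b_def by auto
  have Lcond: "l \<noteq> \<i> * of_real b \<and> l \<noteq> - \<i> * of_real b" if "l \<in> Lset I a" for l
  proof (cases "I = {}")
    case True thus ?thesis using that bnz by (auto simp: Lset_def)
  next
    case False thus ?thesis using that nL by (auto simp: Lset_def)
  qed
  have "Phi (insert k I) a t = (\<integral>y. exp (- \<i> * of_real (b * y)) * Phi I a (t - \<bar>y\<bar>) \<partial>lborel)"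
    unfolding b_def by (rule Phi_insert[OF insert.hyps])
  also have "\<dots> = (\<integral>y. indicator {-t..t} y *\<^sub>R (exp (- \<i> * of_real (b * y)) *
      (\<Sum>l\<in>Lset I a. cf I a l * exp (l * of_real (t - \<bar>y\<bar>)))) \<partial>lborel)"
  proof (intro Bochner_Integration.integral_cong refl)
    fix y :: real
    show "exp (- \<i> * of_real (b * y)) * Phi I a (t - \<bar>y\<bar>) = indicator {-t..t} y *\<^sub>R (exp (- \<i> * of_real (b * y)) *
      (\<Sum>l\<in>Lset I a. cf I a l * exp (l * of_real (t - \<bar>y\<bar>))))"
    proof (cases "\<bar>y\<bar> \<le> t")
      case True
      hence "y \<in> {-t..t}" by auto
      thus ?thesis using IH[of "t - \<bar>y\<bar>"] True by (simp add: Fcl_rep)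
    next
      case False
      hence "y \<notin> {-t..t}" by auto
      thus ?thesis using Phi_neg[of "t - \<bar>y\<bar>" I a] False by simp
    qed
  qed
  also have "\<dots> = (\<Sum>l\<in>Lset I a. cf I a l * ((exp (- \<i> * of_real (b * t)) - exp (l * of_real t)) / (- \<i> * of_real b - l)
                     + (exp (\<i> * of_real (b * t)) - exp (l * of_real t)) / (\<i> * of_real b - l)))"
    by (rule conv_exp_sum[OF finite_Lset[OF insert.hyps(1)] insert.prems(2) Lcond])
  also have "\<dots> = Fcl (insert k I) a t"
  proof (cases "I = {}")
    case True
    define \<mu> where "\<mu> = \<i> * complex_of_real b"
    have mnz: "\<mu> \<noteq> 0" using bnz by (simp add: \<mu>_def)
    have neq: "\<mu> \<noteq> - \<mu>" using mnz by simp
    have "Fcl (insert k I) a t = 2 * (exp (\<mu> * of_real t) / (\<mu> - - \<mu>) + exp (- \<mu> * of_real t) / (- \<mu> - \<mu>))"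
    proof -
      have L1: "Lam (insert k I) a = {\<mu>, - \<mu>}" using True by (auto simp: Lam_def \<mu>_def b_def)
      show ?thesis unfolding Fcl_def L1 using True neq by (simp add: dd_pair)
    qed
    moreover have e: "exp (- \<i> * of_real (b * t)) = exp (- \<mu> * of_real t)" "exp (\<i> * of_real (b * t)) = exp (\<mu> * of_real t)"
      unfolding \<mu>_def by (simp_all add: algebra_simps)
    moreover have mm: "- \<i> * of_real b = - \<mu>" "\<i> * of_real b = \<mu>" unfolding \<mu>_def by simp_all
    moreover have "(exp (- \<mu> * of_real t) - 1) / (- \<mu>) + (exp (\<mu> * of_real t) - 1) / \<mu> =
        2 * (exp (\<mu> * of_real t) / (\<mu> - - \<mu>) + exp (- \<mu> * of_real t) / (- \<mu> - \<mu>))"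
      using mnz by (simp add: field_simps)
    ultimately show ?thesis using True unfolding Lset_def cf_def e mm
      by simp
  next
    case False
    define m where "m = card I"
    have m1: "m \<ge> 1" using False insert.hyps(1) unfolding m_def by (simp add: Suc_le_eq card_gt_0_iff)
    have cL: "card (Lam I a) \<ge> m" unfolding m_def by (rule card_Lam[OF insert.hyps(1) okI])
    have ck: "card (insert k I) = m + 1" using insert.hyps unfolding m_def by simp
    show ?thesis
      using step_alg[OF finite_Lam[OF insert.hyps(1)] m1 cL bnz nL, of t] False
      unfolding Lset_def cf_def m_def[symmetric] Fcl_def ck
      by (simp add: Lam_insert b_def)
  qed
  finally show ?case .
qed


lemma prod_pm:
  fixes w :: "'j \<Rightarrow> complex"
  assumes fin: "finite J" and inj: "inj_on w J" and pm: "\<And>i j. i \<in> J \<Longrightarrow> j \<in> J \<Longrightarrow> w i \<noteq> - w j"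
    and j: "j \<in> J" and s: "s = w j \<or> s = - w j"
  shows "(\<Prod>z\<in>(w`J \<union> (\<lambda>i. - w i)`J) - {s}. s - z) = 2 * s * (\<Prod>i\<in>J-{j}. s^2 - (w i)^2)"
proof -
  have wnz: "w j \<noteq> 0" using pm[OF j j] by auto
  have snz: "s \<noteq> 0" using s wnz by auto
  have sms: "-s \<noteq> s"
  proof
    assume a: "-s = s"
    have "s + s = s + (- s)" using a by simp
    hence "s + s = 0" by simp
    hence "2 * s = 0" unfolding mult_2 .
    thus False using snz by simp
  qed
  have sq: "s^2 = (w j)^2" using s by auto
  have weq: "w i = w j \<longleftrightarrow> i = j" if "i \<in> J" for i using inj_on_eq_iff[OF inj that j] .
  have eqset: "(w`J \<union> (\<lambda>i. - w i)`J) - {s} = insert (-s) (w`(J-{j}) \<union> (\<lambda>i. - w i)`(J-{j}))"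
  proof (rule set_eqI)
    fix z
    show "z \<in> (w`J \<union> (\<lambda>i. - w i)`J) - {s} \<longleftrightarrow> z \<in> insert (-s) (w`(J-{j}) \<union> (\<lambda>i. - w i)`(J-{j}))"
    proof
      assume "z \<in> (w`J \<union> (\<lambda>i. - w i)`J) - {s}"
      then obtain i where i: "i \<in> J" "z = w i \<or> z = - w i" "z \<noteq> s" by auto
      show "z \<in> insert (-s) (w`(J-{j}) \<union> (\<lambda>i. - w i)`(J-{j}))"
      proof (cases "i = j")
        case True thus ?thesis using i s by auto
      next
        case False thus ?thesis using i by auto
      qed
    next
      assume "z \<in> insert (-s) (w`(J-{j}) \<union> (\<lambda>i. - w i)`(J-{j}))"
      moreover have "-s \<in> (w`J \<union> (\<lambda>i. - w i)`J) - {s}" using s j sms by auto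
      moreover have "z \<in> (w`J \<union> (\<lambda>i. - w i)`J) - {s}" if zin: "z \<in> w`(J-{j})"
      proof -
        obtain i where i: "i \<in> J" "i \<noteq> j" "z = w i" using zin by auto
        have "w i \<noteq> w j" using weq[OF i(1)] i(2) by auto
        moreover have "w i \<noteq> - w j" using pm[OF i(1) j] .
        ultimately show ?thesis using i s by auto
      qed
      moreover have "z \<in> (w`J \<union> (\<lambda>i. - w i)`J) - {s}" if zin: "z \<in> (\<lambda>i. - w i)`(J-{j})"
      proof -
        obtain i where i: "i \<in> J" "i \<noteq> j" "z = - w i" using zin by auto
        have "- w i \<noteq> - w j" using weq[OF i(1)] i(2) by auto
        moreover have "- w i \<noteq> w j" using pm[OF j i(1)] by auto
        ultimately show ?thesis using i s by auto
      qed
      ultimately show "z \<in> (w`J \<union> (\<lambda>i. - w i)`J) - {s}" by (cases "z = -s") auto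
    qed
  qed
  have nin: "-s \<notin> w`(J-{j}) \<union> (\<lambda>i. - w i)`(J-{j})"
  proof
    assume "-s \<in> w`(J-{j}) \<union> (\<lambda>i. - w i)`(J-{j})"
    then obtain i where i: "i \<in> J" "i \<noteq> j" "-s = w i \<or> -s = - w i" by blast
    have n1: "w i \<noteq> w j" using weq[OF i(1)] i(2) by auto
    have n2: "w i \<noteq> - w j" using pm[OF i(1) j] .
    have n3: "w j \<noteq> - w i" using pm[OF j i(1)] .
    from s show False
    proof
      assume sj: "s = w j"
      from i(3) show False
      proof
        assume "-s = w i" hence "w i = - w j" using sj by simp
        thus False using n2 by contradiction
      next
        assume "-s = - w i" hence "w i = w j" using sj by simp
        thus False using n1 by contradiction
      qed
    next
      assume sj: "s = - w j"
      from i(3) show False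
      proof
        assume "-s = w i" hence "w i = w j" using sj by simp
        thus False using n1 by contradiction
      next
        assume "-s = - w i" hence "w j = - w i" using sj by simp
        thus False using n3 by contradiction
      qed
    qed
  qed
  have disj: "w`(J-{j}) \<inter> (\<lambda>i. - w i)`(J-{j}) = {}"
  proof -
    { fix z assume "z \<in> w`(J-{j})" "z \<in> (\<lambda>i. - w i)`(J-{j})"
      then obtain i i' where ii: "i\<in>J" "i'\<in>J" "z = w i" "z = - w i'" by blast
      hence "w i = - w i'" by simp
      hence False using pm[OF ii(1,2)] by simp }
    thus ?thesis by blast
  qed
  have inj2: "inj_on (\<lambda>i. - w i) (J-{j})" using inj by (auto simp: inj_on_def)
  have inj1: "inj_on w (J-{j})" using inj by (auto simp: inj_on_def)
  have "(\<Prod>z\<in>(w`J \<union> (\<lambda>i. - w i)`J) - {s}. s - z) =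
        (s - - s) * ((\<Prod>z\<in>w`(J-{j}). s - z) * (\<Prod>z\<in>(\<lambda>i. - w i)`(J-{j}). s - z))"
    unfolding eqset using fin nin disj by (simp add: prod.union_disjoint)
  also have "\<dots> = 2 * s * ((\<Prod>i\<in>J-{j}. s - w i) * (\<Prod>i\<in>J-{j}. s + w i))"
    by (simp add: prod.reindex[OF inj1] prod.reindex[OF inj2])
  also have "\<dots> = 2 * s * (\<Prod>i\<in>J-{j}. s^2 - (w i)^2)"
    by (simp add: prod.distrib[symmetric] power2_eq_square algebra_simps)
  finally show ?thesis .
qed

lemma dd_pm:
  fixes w :: "'j \<Rightarrow> complex"
  assumes fin: "finite J" and inj: "inj_on w J" and pm: "\<And>i j. i \<in> J \<Longrightarrow> j \<in> J \<Longrightarrow> w i \<noteq> - w j"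
  shows "dd (w`J \<union> (\<lambda>i. - w i)`J) f = (\<Sum>j\<in>J. (f (w j) - f (- w j)) / (2 * w j * (\<Prod>i\<in>J-{j}. (w j)^2 - (w i)^2)))"
proof -
  have disj: "w`J \<inter> (\<lambda>i. - w i)`J = {}"
  proof -
    { fix z assume "z \<in> w`J" "z \<in> (\<lambda>i. - w i)`J"
      then obtain i i' where ii: "i\<in>J" "i'\<in>J" "z = w i" "z = - w i'" by blast
      hence "w i = - w i'" by simp
      hence False using pm[OF ii(1,2)] by simp }
    thus ?thesis by blast
  qed
  have inj2: "inj_on (\<lambda>i. - w i) J" using inj by (auto simp: inj_on_def)
  have "dd (w`J \<union> (\<lambda>i. - w i)`J) f =
        (\<Sum>j\<in>J. f (w j) / (\<Prod>z\<in>(w`J \<union> (\<lambda>i. - w i)`J) - {w j}. w j - z)) +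
        (\<Sum>j\<in>J. f (- w j) / (\<Prod>z\<in>(w`J \<union> (\<lambda>i. - w i)`J) - {- w j}. - w j - z))"
    unfolding dd_def using fin disj by (simp add: sum.union_disjoint sum.reindex[OF inj] sum.reindex[OF inj2])
  also have "\<dots> = (\<Sum>j\<in>J. f (w j) / (2 * w j * (\<Prod>i\<in>J-{j}. (w j)^2 - (w i)^2))) +
        (\<Sum>j\<in>J. f (- w j) / (2 * (- w j) * (\<Prod>i\<in>J-{j}. (w j)^2 - (w i)^2)))"
  proof -
    have "(\<Prod>z\<in>(w`J \<union> (\<lambda>i. - w i)`J) - {w j}. w j - z) = 2 * w j * (\<Prod>i\<in>J-{j}. (w j)^2 - (w i)^2)"
      if "j \<in> J" for j
      using prod_pm[OF fin inj pm that, of "w j"] by simp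
    moreover have "(\<Prod>z\<in>(w`J \<union> (\<lambda>i. - w i)`J) - {- w j}. - w j - z) = 2 * (- w j) * (\<Prod>i\<in>J-{j}. (w j)^2 - (w i)^2)"
      if "j \<in> J" for j
      using prod_pm[OF fin inj pm that, of "- w j"] by simp
    ultimately show ?thesis by (intro arg_cong2[where f="(+)"] sum.cong refl) auto
  qed
  also have "\<dots> = (\<Sum>j\<in>J. (f (w j) - f (- w j)) / (2 * w j * (\<Prod>i\<in>J-{j}. (w j)^2 - (w i)^2)))"
    unfolding sum.distrib[symmetric] by (intro sum.cong refl) (simp add: diff_divide_distrib)
  finally show ?thesis .
qed

definition sig :: "nat \<Rightarrow> real \<Rightarrow> real" where
  "sig n c = (if odd n then (-1)^((n - 1) div 2) * sin c else (-1)^(n div 2 - 1) * cos c)"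

lemma T_identity:
  fixes c :: real and n :: nat
  assumes c: "c \<noteq> 0" and n: "n \<ge> 1"
  shows "((\<i> * of_real c)^(n-1) * exp (\<i> * of_real c) - (- (\<i> * of_real c))^(n-1) * exp (- (\<i> * of_real c)))
          / (2 * (\<i> * of_real c)) = of_real (sig n c * c^(n-1) / c)"
proof -
  have e1: "exp (\<i> * of_real c) = cis c" by (simp add: cis_conv_exp)
  have e2: "exp (- (\<i> * of_real c)) = cis (-c)" by (simp add: cis_conv_exp)
  have sub: "cis c - cis (-c) = 2 * \<i> * of_real (sin c)" by (simp add: complex_eq_iff)
  have add: "cis c + cis (-c) = 2 * of_real (cos c)" by (simp add: complex_eq_iff)
  have sq: "(\<i> * complex_of_real c)^2 = - of_real (c^2)" by (simp add: power_mult_distrib)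
  show ?thesis
  proof (cases "odd n")
    case True
    then obtain k where k: "n = 2 * k + 1" by (rule oddE)
    define p where "p = k"
    have p: "n - 1 = 2 * p" using k p_def by simp
    have pw1: "(\<i> * of_real c)^(n-1) = (- of_real (c^2))^p" unfolding p power_mult sq ..
    have pw2: "(- (\<i> * of_real c))^(n-1) = (- of_real (c^2))^p" unfolding p power_mult by (simp add: sq)
    have pd: "(n - 1) div 2 = p" using p by simp
    have pd': "(n - Suc 0) div 2 = p" using pd by simp
    have "((\<i> * of_real c)^(n-1) * exp (\<i> * of_real c) - (- (\<i> * of_real c))^(n-1) * exp (- (\<i> * of_real c)))
          = (- of_real (c^2))^p * (cis c - cis (-c))" unfolding pw1 pw2 e1 e2 by (simp add: algebra_simps)
    also have "\<dots> = 2 * (\<i> * of_real c) * of_real ((-1)^p * sin c * c^(n-1) / c)"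
    proof -
      have "(- complex_of_real (c^2))^p = (-1)^p * (complex_of_real (c^2))^p" by (rule power_minus)
      also have "\<dots> = of_real ((-1)^p * c^(2*p))" by (simp add: power_mult)
      finally have "(- complex_of_real (c^2))^p = of_real ((-1)^p * c^(2*p))" .
      thus ?thesis unfolding sub p using c by (simp add: field_simps)
    qed
    finally show ?thesis using c True by (simp add: sig_def pd')
  next
    case False
    then obtain k where k: "n = 2 * k" by auto
    define p where "p = k - 1"
    have "k \<ge> 1" using k n by simp
    hence p: "n - 1 = 2 * p + 1" using k p_def by simp
    have pw1: "(\<i> * of_real c)^(n-1) = (\<i> * of_real c) * (- of_real (c^2))^p" unfolding p power_add power_mult sq by simp
    have pw2: "(- (\<i> * of_real c))^(n-1) = - (\<i> * of_real c) * (- of_real (c^2))^p" unfolding p power_add power_mult by (simp add: sq)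
    have pd: "n div 2 - 1 = p" using p by simp
    have pd': "n div 2 - Suc 0 = p" using pd by simp
    have "((\<i> * of_real c)^(n-1) * exp (\<i> * of_real c) - (- (\<i> * of_real c))^(n-1) * exp (- (\<i> * of_real c)))
          = (\<i> * of_real c) * (- of_real (c^2))^p * (cis c + cis (-c))" unfolding pw1 pw2 e1 e2 by (simp add: algebra_simps)
    also have "\<dots> = 2 * (\<i> * of_real c) * of_real ((-1)^p * cos c * c^(n-1) / c)"
    proof -
      have "(- complex_of_real (c^2))^p = (-1)^p * (complex_of_real (c^2))^p" by (rule power_minus)
      also have "\<dots> = of_real ((-1)^p * c^(2*p))" by (simp add: power_mult)
      finally have "(- complex_of_real (c^2))^p = of_real ((-1)^p * c^(2*p))" .
      thus ?thesis unfolding add p using c by (simp add: field_simps)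
    qed
    finally show ?thesis using c False by (simp add: sig_def pd')
  qed
qed


lemma basis_vec_eq: "(Basis :: (real^'n) set) = (\<lambda>i. axis i 1) ` UNIV"
  by (auto simp: Basis_vec_def)

lemma inj_axis: "inj (\<lambda>i::'n::finite. axis i (1::real))"
  by (auto simp: inj_on_def axis_eq_axis)

lemma sum_Basis_cart: "(\<Sum>b\<in>(Basis::(real^'n) set). g b) = (\<Sum>i\<in>UNIV. g (axis i 1))"
  by (simp add: basis_vec_eq sum.reindex[OF inj_axis])

lemma closed_cross: "closed (cross_polytope :: (real^'n) set)"
  unfolding cross_polytope_def
  by (intro closed_Collect_le continuous_intros)

lemma ft_Phi:
  fixes y :: "real^'n"
  shows "fourier_transform (indicator (cross_polytope :: (real^'n) set)) y =
         Phi (Basis :: (real^'n) set) (\<lambda>b. 2*pi*(b \<bullet> y)) 1"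
proof -
  define \<phi> :: "((real^'n) \<Rightarrow> real) \<Rightarrow> real^'n" where "\<phi> = (\<lambda>f. \<Sum>b\<in>Basis. f b *\<^sub>R b)"
  define g where "g = (\<lambda>x::real^'n. indicator cross_polytope x * exp (- 2 * pi * \<i> * complex_of_real (x \<bullet> y)))"
  have [measurable]: "(cross_polytope :: (real^'n) set) \<in> sets borel"
    using closed_cross by (rule borel_closed)
  have gmeas: "g \<in> borel_measurable borel" unfolding g_def by measurable
  have \<phi>meas: "\<phi> \<in> measurable (Pi\<^sub>M Basis (\<lambda>b. lborel)) borel" unfolding \<phi>_def by measurable
  have pw: "g (\<phi> x) = (if (\<Sum>b\<in>Basis. \<bar>x b\<bar>) \<le> 1 then exp (- \<i> * of_real (\<Sum>b\<in>Basis. 2*pi*(b \<bullet> y) * x b)) else 0)"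
    for x
  proof -
    have c: "\<phi> x \<bullet> b = x b" if "b \<in> Basis" for b unfolding \<phi>_def using that by simp
    have c': "b \<bullet> \<phi> x = x b" if "b \<in> Basis" for b using c[OF that] by (simp add: inner_commute)
    have s1: "(\<Sum>i\<in>UNIV. \<bar>\<phi> x $ i\<bar>) = (\<Sum>b\<in>Basis. \<bar>x b\<bar>)"
    proof -
      have "(\<Sum>i\<in>UNIV. \<bar>\<phi> x $ i\<bar>) = (\<Sum>i\<in>UNIV. \<bar>\<phi> x \<bullet> axis i 1\<bar>)" by (simp add: cart_eq_inner_axis)
      also have "\<dots> = (\<Sum>b\<in>Basis. \<bar>\<phi> x \<bullet> b\<bar>)" by (rule sum_Basis_cart[symmetric])
      also have "\<dots> = (\<Sum>b\<in>Basis. \<bar>x b\<bar>)" by (intro sum.cong refl) (simp add: c)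
      finally show ?thesis .
    qed
    have s2: "\<phi> x \<bullet> y = (\<Sum>b\<in>Basis. x b * (b \<bullet> y))"
      by (subst euclidean_inner) (intro sum.cong refl, simp add: c c' inner_commute)
    have s3: "- 2 * pi * \<i> * complex_of_real (\<phi> x \<bullet> y) = - \<i> * of_real (\<Sum>b\<in>Basis. 2*pi*(b \<bullet> y) * x b)"
      unfolding s2 by (simp add: sum_distrib_left algebra_simps)
    show ?thesis unfolding g_def cross_polytope_def s3 using s1 by (simp add: indicator_def)
  qed
  have int: "integrable (Pi\<^sub>M Basis (\<lambda>b. lborel)) (\<lambda>x. g (\<phi> x))"
    unfolding pw by (rule Phi_integrable) simp
  have leq: "(lborel :: (real^'n) measure) = distr (Pi\<^sub>M Basis (\<lambda>b. lborel)) borel \<phi>"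
    unfolding \<phi>_def by (rule lborel_eq)
  have intl: "integrable lborel g"
    unfolding leq using integrable_distr_eq[OF \<phi>meas gmeas] int by simp
  have "fourier_transform (indicator (cross_polytope :: (real^'n) set)) y = integral UNIV g"
    unfolding fourier_transform_def g_def ..
  also have "\<dots> = integral\<^sup>L lborel g"
    by (rule integral_unique[OF has_integral_integral_lborel[OF intl]])
  also have "\<dots> = integral\<^sup>L (distr (Pi\<^sub>M Basis (\<lambda>b. lborel)) borel \<phi>) g"
    by (simp only: leq)
  also have "\<dots> = (\<integral>x. g (\<phi> x) \<partial>Pi\<^sub>M Basis (\<lambda>b. lborel))"
    by (rule integral_distr[OF \<phi>meas gmeas])
  also have "\<dots> = Phi (Basis :: (real^'n) set) (\<lambda>b. 2*pi*(b \<bullet> y)) 1"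
    unfolding Phi_def pw ..
  finally show ?thesis .
qed


lemma scale_lemma:
  fixes y :: "'n::finite \<Rightarrow> real" and j :: 'n and n :: nat
  assumes nz: "y j \<noteq> 0" and n: "n = CARD('n)"
    and Pnz: "(\<Prod>i\<in>UNIV-{j}. (y j)^2 - (y i)^2) \<noteq> 0"
  shows "2^n * ((2*pi*y j)^(n-1) / (2*pi*y j)) / (\<Prod>i\<in>UNIV-{j}. (2*pi*y i)^2 - (2*pi*y j)^2)
       = (-1)^(n-1) * pi powi (- int n) * (y j powi (int n - 2) / (\<Prod>i\<in>UNIV-{j}. (y j)^2 - (y i)^2))"
proof -
  define m where "m = n - 1"
  have n1: "n \<ge> 1" using n by (simp add: Suc_le_eq)
  hence nm: "n = Suc m" unfolding m_def by simp
  define K where "K = 2 * pi"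
  define P where "P = (\<Prod>i\<in>UNIV-{j}. (y j)^2 - (y i)^2)"
  have cardD: "card (UNIV - {j}) = m" using n unfolding m_def by (simp add: card_Diff_singleton)
  have "(\<Prod>i\<in>UNIV-{j}. (2*pi*y i)^2 - (2*pi*y j)^2) = (\<Prod>i\<in>UNIV-{j}. (- (K^2)) * ((y j)^2 - (y i)^2))"
    by (intro prod.cong refl) (simp add: K_def power_mult_distrib algebra_simps)
  also have "\<dots> = (- (K^2))^m * P"
    unfolding prod.distrib P_def using cardD by simp
  also have "(- (K^2))^m = (-1)^m * K^m * K^m"
  proof -
    have "(- (K^2))^m = (-1)^m * (K^2)^m" by (rule power_minus)
    also have "(K^2)^m = K^m * K^m" by (simp add: power2_eq_square power_mult_distrib)
    finally show ?thesis by simp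
  qed
  finally have Pe: "(\<Prod>i\<in>UNIV-{j}. (2*pi*y i)^2 - (2*pi*y j)^2) = (-1)^m * K^m * K^m * P" .
  have Y: "y j powi (int n - 2) = y j ^ m / y j"
  proof -
    have "int n - 2 = int m - 1" using nm by simp
    thus ?thesis using nz by (simp add: power_int_diff)
  qed
  have PI: "pi powi (- int n) = 1 / pi ^ n" by (simp add: power_int_minus divide_inverse)
  have Kn: "K ^ n = 2 ^ n * pi ^ n" unfolding K_def by (simp add: power_mult_distrib)
  have Km: "K ^ m = 2 ^ m * pi ^ m" unfolding K_def by (simp add: power_mult_distrib)
  have lhs: "2^n * ((2*pi*y j)^(n-1) / (2*pi*y j)) = 2^n * K^m * y j ^ m / (K * y j)"
    unfolding K_def m_def by (simp add: power_mult_distrib)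
  have Knz: "K \<noteq> 0" unfolding K_def by simp
  have m1: "((-1::real)^m) * (-1)^m = 1" by (simp add: power_mult_distrib[symmetric])
  show ?thesis
    unfolding Pe Y PI lhs P_def[symmetric] m_def[symmetric]
    using nz Pnz Knz nm
    unfolding Km K_def by (simp add: field_simps minus_one_power_iff)
qed

lemma zero_sum_even:
  fixes y :: "'n::finite \<Rightarrow> real" and n :: nat
  assumes n: "n = CARD('n)" and ev: "even n"
    and dist: "\<And>i j. i \<noteq> j \<Longrightarrow> (y i)^2 \<noteq> (y j)^2"
  shows "(\<Sum>j\<in>UNIV. y j powi (int n - 2) / (\<Prod>i\<in>UNIV-{j}. (y j)^2 - (y i)^2)) = 0"
proof -
  have "n \<ge> 1" using n by (simp add: Suc_le_eq)
  moreover have "n \<noteq> 1" using ev by auto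
  ultimately have n2: "n \<ge> 2" by linarith
  define p where "p = n div 2 - 1"
  have np: "int n - 2 = int (2 * p)" using n2 ev unfolding p_def by auto
  define sq where "sq = (\<lambda>i. (y i)^2)"
  have inj: "inj sq" unfolding sq_def inj_on_def using dist by blast
  define U where "U = range sq"
  have cU: "card U = n" unfolding U_def n using card_image[OF inj] by simp
  have "dd U (\<lambda>u. u ^ p) = 0"
    by (rule dd_monomial_zero) (use cU n2 in \<open>auto simp: U_def p_def\<close>)
  moreover have "dd U (\<lambda>u. u ^ p) = (\<Sum>j\<in>UNIV. y j powi (int n - 2) / (\<Prod>i\<in>UNIV-{j}. (y j)^2 - (y i)^2))"
  proof -
    have "dd U (\<lambda>u. u ^ p) = (\<Sum>j\<in>UNIV. sq j ^ p / (\<Prod>v\<in>U - {sq j}. sq j - v))"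
      unfolding dd_def U_def by (simp add: sum.reindex[OF inj])
    also have "\<dots> = (\<Sum>j\<in>UNIV. y j powi (int n - 2) / (\<Prod>i\<in>UNIV-{j}. (y j)^2 - (y i)^2))"
    proof (intro sum.cong refl)
      fix j
      have "U - {sq j} = sq ` (UNIV - {j})" unfolding U_def using inj by (auto simp: inj_on_eq_iff)
      moreover have "inj_on sq (UNIV - {j})" using inj by (auto simp: inj_on_def)
      ultimately have "(\<Prod>v\<in>U - {sq j}. sq j - v) = (\<Prod>i\<in>UNIV-{j}. (y j)^2 - (y i)^2)"
        by (simp add: prod.reindex sq_def)
      moreover have "sq j ^ p = y j powi (int n - 2)" unfolding np power_int_of_nat sq_def power_mult ..
      ultimately show "sq j ^ p / (\<Prod>v\<in>U - {sq j}. sq j - v) = y j powi (int n - 2) / (\<Prod>i\<in>UNIV-{j}. (y j)^2 - (y i)^2)"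
        by simp
    qed
    finally show ?thesis .
  qed
  ultimately show ?thesis by simp
qed


theorem mainTheorem9:
  fixes y :: "real ^ 'n"
  assumes nonzero: "\<And>j. y $ j \<noteq> 0"
    and distinct: "\<And>i j. i \<noteq> j \<Longrightarrow> (y $ i)^2 \<noteq> (y $ j)^2"
  shows "fourier_transform (indicator (cross_polytope :: (real ^ 'n) set)) y =
    complex_of_real
     (if odd CARD('n) then
        pi powi (- int CARD('n)) * (-1) ^ ((CARD('n) - 1) div 2) *
        (\<Sum>j\<in>UNIV. (y $ j) powi (int CARD('n) - 2) * sin (2 * pi * y $ j) /
                    (\<Prod>i\<in>UNIV - {j}. (y $ j)^2 - (y $ i)^2))
      else
        pi powi (- int CARD('n)) * (-1) ^ (CARD('n) div 2 - 1) *
        (\<Sum>j\<in>UNIV. 2 * (y $ j) powi (int CARD('n) - 2) * (sin (pi * y $ j))^2 /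
                    (\<Prod>i\<in>UNIV - {j}. (y $ j)^2 - (y $ i)^2)))"
proof -
  define n where "n = CARD('n)"
  define a where "a = (\<lambda>b::real^'n. 2*pi*(b \<bullet> y))"
  define c where "c = (\<lambda>i::'n. 2*pi*(y$i))"
  define w where "w = (\<lambda>i::'n. \<i> * complex_of_real (c i))"
  define Pr where "Pr = (\<lambda>j::'n. \<Prod>i\<in>UNIV - {j}. (y $ j)^2 - (y $ i)^2)"
  define Y where "Y = (\<lambda>j::'n. (y $ j) powi (int n - 2))"
  have n1: "n \<ge> 1" unfolding n_def by (simp add: Suc_le_eq)
  have aax: "a (axis i 1) = c i" for i unfolding a_def c_def by (simp add: inner_axis')
  have cnz: "c i \<noteq> 0" for i unfolding c_def using nonzero[of i] by simp
  have cabs: "\<bar>c i\<bar> \<noteq> \<bar>c j\<bar>" if "i \<noteq> j" for i j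
  proof
    assume "\<bar>c i\<bar> = \<bar>c j\<bar>"
    hence "\<bar>y $ i\<bar> = \<bar>y $ j\<bar>" unfolding c_def by (simp add: abs_mult)
    hence "\<bar>y $ i\<bar>^2 = \<bar>y $ j\<bar>^2" by simp
    hence "(y $ i)^2 = (y $ j)^2" by simp
    thus False using distinct[OF that] by contradiction
  qed
  have Prnz: "Pr j \<noteq> 0" for j
    unfolding Pr_def using distinct by (auto simp: prod_zero_iff)
  have okA: "A_ok (Basis::(real^'n) set) a"
    unfolding A_ok_def basis_vec_eq using cnz cabs by (auto simp: aax axis_eq_axis)
  have cardB: "card (Basis::(real^'n) set) = n" by (simp add: n_def)
  have BnE: "(Basis::(real^'n) set) \<noteq> {}" by simp
  have Lam: "Lam (Basis::(real^'n) set) a = w ` UNIV \<union> (\<lambda>i. - w i) ` UNIV"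
    unfolding Lam_def basis_vec_eq image_image w_def by (simp add: aax)
  have inj_w: "inj_on w UNIV"
  proof (rule inj_onI)
    fix i j assume "w i = w j"
    hence "c i = c j" unfolding w_def by simp
    thus "i = j" using cabs[of i j] by (cases "i = j") auto
  qed
  have pm: "w i \<noteq> - w j" if "i \<in> UNIV" "j \<in> UNIV" for i j
  proof
    assume "w i = - w j"
    hence cij: "c i = - c j" unfolding w_def by (simp add: complex_eq_iff)
    show False
    proof (cases "i = j")
      case True thus False using cij cnz[of i] by simp
    next
      case False thus False using cij cabs[OF False] by simp
    qed
  qed
  have "fourier_transform (indicator (cross_polytope :: (real ^ 'n) set)) y = Phi (Basis::(real^'n) set) a 1"
    unfolding a_def by (rule ft_Phi)
  also have "\<dots> = Fcl (Basis::(real^'n) set) a 1"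
    by (rule Phi_closed) (simp_all add: okA)
  also have "\<dots> = 2^n * dd (w ` UNIV \<union> (\<lambda>i. - w i) ` UNIV) (\<lambda>z. z^(n-1) * exp (z * complex_of_real 1))"
    unfolding Fcl_def cardB Lam using BnE by simp
  also have "\<dots> = 2^n * (\<Sum>j\<in>UNIV. ((w j)^(n-1) * exp (w j * complex_of_real 1) - (- w j)^(n-1) * exp (- w j * complex_of_real 1))
        / (2 * w j * (\<Prod>i\<in>UNIV-{j}. (w j)^2 - (w i)^2)))"
    by (subst dd_pm[OF _ inj_w pm]) simp_all
  also have "\<dots> = complex_of_real (\<Sum>j\<in>UNIV. 2^n * (sig n (c j) * c j^(n-1) / c j) / (\<Prod>i\<in>UNIV-{j}. (c i)^2 - (c j)^2))"
    unfolding of_real_sum sum_distrib_left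
  proof (intro sum.cong refl)
    fix j
    have Dj: "(\<Prod>i\<in>UNIV-{j}. (w j)^2 - (w i)^2) = complex_of_real (\<Prod>i\<in>UNIV-{j}. (c i)^2 - (c j)^2)"
      unfolding of_real_prod w_def by (intro prod.cong refl) (simp add: power_mult_distrib)
    have T: "((w j)^(n-1) * exp (w j) - (- w j)^(n-1) * exp (- w j)) / (2 * w j) = complex_of_real (sig n (c j) * c j^(n-1) / c j)"
      unfolding w_def by (rule T_identity[OF cnz n1])
    show "2^n * (((w j)^(n-1) * exp (w j * complex_of_real 1) - (- w j)^(n-1) * exp (- w j * complex_of_real 1))
        / (2 * w j * (\<Prod>i\<in>UNIV-{j}. (w j)^2 - (w i)^2))) =
        complex_of_real (2^n * (sig n (c j) * c j^(n-1) / c j) / (\<Prod>i\<in>UNIV-{j}. (c i)^2 - (c j)^2))"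
    proof -
      define X where "X = (w j)^(n-1) * exp (w j) - (- w j)^(n-1) * exp (- w j)"
      have "2^n * (((w j)^(n-1) * exp (w j * complex_of_real 1) - (- w j)^(n-1) * exp (- w j * complex_of_real 1))
        / (2 * w j * (\<Prod>i\<in>UNIV-{j}. (w j)^2 - (w i)^2))) = 2^n * ((X / (2 * w j)) / (\<Prod>i\<in>UNIV-{j}. (w j)^2 - (w i)^2))"
        unfolding X_def by (simp only: of_real_1 mult_1_right divide_divide_eq_left)
      also have "\<dots> = 2^n * (complex_of_real (sig n (c j) * c j^(n-1) / c j) / complex_of_real (\<Prod>i\<in>UNIV-{j}. (c i)^2 - (c j)^2))"
        unfolding X_def T Dj ..
      also have "\<dots> = complex_of_real (2^n * (sig n (c j) * c j^(n-1) / c j) / (\<Prod>i\<in>UNIV-{j}. (c i)^2 - (c j)^2))"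
        by simp
      finally show ?thesis .
    qed
  qed
  also have "(\<Sum>j\<in>UNIV. 2^n * (sig n (c j) * c j^(n-1) / c j) / (\<Prod>i\<in>UNIV-{j}. (c i)^2 - (c j)^2)) =
             (\<Sum>j\<in>UNIV. sig n (c j) * ((-1)^(n-1) * pi powi (- int n) * (Y j / Pr j)))"
  proof (intro sum.cong refl)
    fix j
    have sc: "2^n * ((2*pi*y$j)^(n-1) / (2*pi*y$j)) / (\<Prod>i\<in>UNIV-{j}. (2*pi*y$i)^2 - (2*pi*y$j)^2)
       = (-1)^(n-1) * pi powi (- int n) * ((y$j) powi (int n - 2) / (\<Prod>i\<in>UNIV-{j}. (y$j)^2 - (y$i)^2))"
      by (rule scale_lemma[where y="\<lambda>i. y $ i", OF nonzero n_def]) (use Prnz[of j] in \<open>simp add: Pr_def\<close>)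
    show "2^n * (sig n (c j) * c j^(n-1) / c j) / (\<Prod>i\<in>UNIV-{j}. (c i)^2 - (c j)^2) =
          sig n (c j) * ((-1)^(n-1) * pi powi (- int n) * (Y j / Pr j))"
    proof -
      have g: "2^n * (sig n (c j) * c j^(n-1) / c j) / P = sig n (c j) * (2^n * (c j^(n-1) / c j) / P)" for P :: real
        by (simp add: divide_inverse mult.assoc mult.left_commute)
      show ?thesis unfolding g unfolding c_def sc Y_def Pr_def ..
    qed
  qed
  also have "(\<Sum>j\<in>UNIV. sig n (c j) * ((-1)^(n-1) * pi powi (- int n) * (Y j / Pr j))) =
     (if odd n then
        pi powi (- int n) * (-1) ^ ((n - 1) div 2) *
        (\<Sum>j\<in>UNIV. Y j * sin (2 * pi * y $ j) / Pr j)
      else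
        pi powi (- int n) * (-1) ^ (n div 2 - 1) *
        (\<Sum>j\<in>UNIV. 2 * Y j * (sin (pi * y $ j))^2 / Pr j))"
  proof (cases "odd n")
    case True
    then obtain k where k: "n = 2 * k + 1" by (rule oddE)
    have m1: "(-1::real)^(n-1) = 1" using k by simp
    have "(\<Sum>j\<in>UNIV. sig n (c j) * ((-1)^(n-1) * pi powi (- int n) * (Y j / Pr j))) =
        pi powi (- int n) * (-1) ^ ((n - 1) div 2) * (\<Sum>j\<in>UNIV. Y j * sin (2 * pi * y $ j) / Pr j)"
      unfolding sum_distrib_left m1
      by (intro sum.cong refl) (use True in \<open>simp add: sig_def c_def divide_inverse algebra_simps\<close>)
    thus ?thesis using True by simp
  next
    case False
    then obtain k where k: "n = 2 * k" by auto
    have "k \<ge> 1" using k n1 by simp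
    then have m1: "(-1::real)^(n-1) = -1" using k by (simp add: minus_one_power_iff)
    define S where "S = (-1::real) ^ (n div 2 - 1)"
    define PP where "PP = pi powi (- int n)"
    have tj: "sig n (c j) * ((-1)^(n-1) * PP * (Y j / Pr j)) =
        S * PP * (2 * Y j * (sin (pi * y $ j))^2 / Pr j) - S * PP * (Y j / Pr j)" for j
    proof -
      have cd: "cos (c j) = 1 - 2 * (sin (pi * y $ j))^2"
        using cos_double_sin[of "pi * y $ j"] unfolding c_def by (simp add: mult.assoc)
      show ?thesis unfolding m1 using False by (simp add: sig_def cd S_def divide_inverse algebra_simps)
    qed
    have z: "(\<Sum>j\<in>UNIV. Y j / Pr j) = 0"
      unfolding Y_def Pr_def by (rule zero_sum_even[where y="\<lambda>i. y $ i", OF n_def]) (use False distinct in auto)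
    have "(\<Sum>j\<in>UNIV. sig n (c j) * ((-1)^(n-1) * PP * (Y j / Pr j))) =
          S * PP * (\<Sum>j\<in>UNIV. 2 * Y j * (sin (pi * y $ j))^2 / Pr j) - S * PP * (\<Sum>j\<in>UNIV. Y j / Pr j)"
      unfolding tj sum_subtractf sum_distrib_left ..
    also have "\<dots> = PP * S * (\<Sum>j\<in>UNIV. 2 * Y j * (sin (pi * y $ j))^2 / Pr j)" unfolding z by simp
    finally show ?thesis using False unfolding PP_def S_def by simp
  qed
  finally show ?thesis unfolding n_def Y_def Pr_def .
qed

end
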